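(* Let $G$ be a finite group and $X$ a finite $G$-poset. Let $\alpha:X'/G\to(X/G)'$ be defined by $\alpha(\overline{(x_0<x_1<\dots<x_n)})=(\overline{x_0}<\overline{x_1}<\dots<\overline{x_n})$. Then $\alpha$ is injective if and only if $X$ satisfies property (B). Moreover, if $\alpha$ is injective then it is an isomorphism of posets.
   Context: A finite $G$-poset is a finite poset with a right action of $G$ by order-preserving maps. $X'$ denotes the poset of non-empty chains of $X$ ordered by inclusion, with $G$ acting componentwise. For a $G$-poset $Y$, $Y/G$ is the orbit poset: $\overline{y}\le\overline{z}$ iff there exist representatives $y_1\le z_1$. $X$ satisfies property (B) if the simplicial complex $\mathcal{K}(X)$ of non-empty chains of $X$ does, i.e. whenever $\{v_0,\dots,v_n\}$ and $\{v_0^{g_0},\dots,v_n^{g_n}\}$ are both chains of $X$ with $g_i\in G$, there exists $g\in G$ with $v_i^{g_i}=v_i^g$ for all $i$. *)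

theory Defs
  imports "HOL-Algebra.Group"
begin

definition finite_G_poset ::
  "('g, 'b) monoid_scheme \<Rightarrow> 'a set \<Rightarrow> ('a \<Rightarrow> 'a \<Rightarrow> bool) \<Rightarrow> ('a \<Rightarrow> 'g \<Rightarrow> 'a) \<Rightarrow> bool" where
  "finite_G_poset G X leq act \<longleftrightarrow>
     group G \<and> finite (carrier G) \<and> finite X \<and>
     (\<forall>x\<in>X. leq x x) \<and>
     (\<forall>x\<in>X. \<forall>y\<in>X. leq x y \<and> leq y x \<longrightarrow> x = y) \<and>
     (\<forall>x\<in>X. \<forall>y\<in>X. \<forall>z\<in>X. leq x y \<and> leq y z \<longrightarrow> leq x z) \<and>
     (\<forall>x\<in>X. \<forall>g\<in>carrier G. act x g \<in> X) \<and>
     (\<forall>x\<in>X. act x \<one>\<^bsub>G\<^esub> = x) \<and>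
     (\<forall>x\<in>X. \<forall>g\<in>carrier G. \<forall>h\<in>carrier G. act (act x g) h = act x (g \<otimes>\<^bsub>G\<^esub> h)) \<and>
     (\<forall>x\<in>X. \<forall>y\<in>X. \<forall>g\<in>carrier G. leq x y \<longrightarrow> leq (act x g) (act y g))"

text \<open>Non-empty chains of a poset (A, r), i.e. the poset A' (ordered by inclusion).\<close>
definition chains_of :: "'c set \<Rightarrow> ('c \<Rightarrow> 'c \<Rightarrow> bool) \<Rightarrow> 'c set set" where
  "chains_of A r = {c. c \<noteq> {} \<and> c \<subseteq> A \<and> (\<forall>x\<in>c. \<forall>y\<in>c. r x y \<or> r y x)}"

definition orbit :: "('g, 'b) monoid_scheme \<Rightarrow> ('a \<Rightarrow> 'g \<Rightarrow> 'a) \<Rightarrow> 'a \<Rightarrow> 'a set" where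
  "orbit G act x = {act x g | g. g \<in> carrier G}"

definition orbit_poset :: "('g, 'b) monoid_scheme \<Rightarrow> 'a set \<Rightarrow> ('a \<Rightarrow> 'g \<Rightarrow> 'a) \<Rightarrow> 'a set set" where
  "orbit_poset G X act = orbit G act ` X"

definition orbit_le :: "('a \<Rightarrow> 'a \<Rightarrow> bool) \<Rightarrow> 'a set \<Rightarrow> 'a set \<Rightarrow> bool" where
  "orbit_le leq A B \<longleftrightarrow> (\<exists>a\<in>A. \<exists>b\<in>B. leq a b)"

definition chain_orbit :: "('g, 'b) monoid_scheme \<Rightarrow> ('a \<Rightarrow> 'g \<Rightarrow> 'a) \<Rightarrow> 'a set \<Rightarrow> 'a set set" where
  "chain_orbit G act c = {(\<lambda>x. act x g) ` c | g. g \<in> carrier G}"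

definition chain_orbit_poset ::
  "('g, 'b) monoid_scheme \<Rightarrow> 'a set \<Rightarrow> ('a \<Rightarrow> 'a \<Rightarrow> bool) \<Rightarrow> ('a \<Rightarrow> 'g \<Rightarrow> 'a) \<Rightarrow> 'a set set set" where
  "chain_orbit_poset G X leq act = chain_orbit G act ` chains_of X leq"

definition chain_orbit_le :: "'a set set \<Rightarrow> 'a set set \<Rightarrow> bool" where
  "chain_orbit_le Q1 Q2 \<longleftrightarrow> (\<exists>c1\<in>Q1. \<exists>c2\<in>Q2. c1 \<subseteq> c2)"

definition alpha :: "('g, 'b) monoid_scheme \<Rightarrow> ('a \<Rightarrow> 'g \<Rightarrow> 'a) \<Rightarrow> 'a set set \<Rightarrow> 'a set set" where
  "alpha G act Q = orbit G act ` (SOME c. c \<in> Q)"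

definition property_B ::
  "('g, 'b) monoid_scheme \<Rightarrow> 'a set \<Rightarrow> ('a \<Rightarrow> 'a \<Rightarrow> bool) \<Rightarrow> ('a \<Rightarrow> 'g \<Rightarrow> 'a) \<Rightarrow> bool" where
  "property_B G X leq act \<longleftrightarrow>
     (\<forall>c f. c \<in> chains_of X leq \<longrightarrow> (\<forall>v\<in>c. f v \<in> carrier G) \<longrightarrow>
        (\<lambda>v. act v (f v)) ` c \<in> chains_of X leq \<longrightarrow>
        (\<exists>g\<in>carrier G. \<forall>v\<in>c. act v (f v) = act v g))"

end

theory Submission
  imports Defs "HOL-Algebra.Multiplicative_Group"
begin

lemma max_in_total:
  assumes "finite A" "A \<noteq> {}"
    and tot: "\<forall>a\<in>A. \<forall>b\<in>A. r a b \<or> r b a"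
    and tr: "\<forall>a\<in>A. \<forall>b\<in>A. \<forall>c\<in>A. r a b \<and> r b c \<longrightarrow> r a c"
  shows "\<exists>m\<in>A. \<forall>a\<in>A. r a m"
  using assms
proof (induction A rule: finite_ne_induct)
  case (singleton x)
  have "r x x" using singleton.prems(1) by blast
  then show ?case by blast
next
  case (insert x F)
  have t1: "\<forall>a\<in>F. \<forall>b\<in>F. r a b \<or> r b a" using insert.prems(1) by blast
  have t2: "\<forall>a\<in>F. \<forall>b\<in>F. \<forall>c\<in>F. r a b \<and> r b c \<longrightarrow> r a c" using insert.prems(2) by blast
  obtain m where m: "m \<in> F" "\<forall>a\<in>F. r a m" using insert.IH[OF t1 t2] by blast
  have mi: "m \<in> insert x F" using m by simp
  show ?case
  proof (cases "r m x")
    case True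
    have "\<forall>a\<in>insert x F. r a x"
    proof
      fix a assume a: "a \<in> insert x F"
      show "r a x"
      proof (cases "a = x")
        case True
        then show ?thesis using insert.prems(1) by blast
      next
        case False
        then have "a \<in> F" using a by simp
        then have "r a m" using m by blast
        then show ?thesis using \<open>r m x\<close> insert.prems(2) a mi by blast
      qed
    qed
    then show ?thesis by blast
  next
    case False
    then have "r x m" using insert.prems(1) mi by blast
    then have "\<forall>a\<in>insert x F. r a m" using m by simp
    then show ?thesis using mi by blast
  qed
qed

context
  fixes G X leq act
  assumes fp: "finite_G_poset G X leq act"
begin

lemma grp: "group G" using fp unfolding finite_G_poset_def by (elim conjE) assumption
lemma finG: "finite (carrier G)" using fp unfolding finite_G_poset_def by (elim conjE) assumption
lemma finX: "finite X" using fp unfolding finite_G_poset_def by (elim conjE) assumption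
lemma lrefl0: "\<forall>x\<in>X. leq x x" using fp unfolding finite_G_poset_def by (elim conjE) assumption
lemma lanti0: "\<forall>x\<in>X. \<forall>y\<in>X. leq x y \<and> leq y x \<longrightarrow> x = y"
  using fp unfolding finite_G_poset_def by (elim conjE) assumption
lemma ltrans0: "\<forall>x\<in>X. \<forall>y\<in>X. \<forall>z\<in>X. leq x y \<and> leq y z \<longrightarrow> leq x z"
  using fp unfolding finite_G_poset_def by (elim conjE) assumption
lemma aclosed0: "\<forall>x\<in>X. \<forall>g\<in>carrier G. act x g \<in> X"
  using fp unfolding finite_G_poset_def by (elim conjE) assumption
lemma aone0: "\<forall>x\<in>X. act x \<one>\<^bsub>G\<^esub> = x"
  using fp unfolding finite_G_poset_def by (elim conjE) assumption
lemma acomp0: "\<forall>x\<in>X. \<forall>g\<in>carrier G. \<forall>h\<in>carrier G. act (act x g) h = act x (g \<otimes>\<^bsub>G\<^esub> h)"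
  using fp unfolding finite_G_poset_def by (elim conjE) assumption
lemma amono0: "\<forall>x\<in>X. \<forall>y\<in>X. \<forall>g\<in>carrier G. leq x y \<longrightarrow> leq (act x g) (act y g)"
  using fp unfolding finite_G_poset_def by (elim conjE) assumption

lemma lrefl: "x \<in> X \<Longrightarrow> leq x x" using lrefl0 by blast
lemma lanti: "x \<in> X \<Longrightarrow> y \<in> X \<Longrightarrow> leq x y \<Longrightarrow> leq y x \<Longrightarrow> x = y"
  using lanti0 by blast
lemma ltrans: "x \<in> X \<Longrightarrow> y \<in> X \<Longrightarrow> z \<in> X \<Longrightarrow> leq x y \<Longrightarrow> leq y z \<Longrightarrow> leq x z"
  using ltrans0 by blast
lemma aclosed: "x \<in> X \<Longrightarrow> g \<in> carrier G \<Longrightarrow> act x g \<in> X"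
  using aclosed0 by blast
lemma aone: "x \<in> X \<Longrightarrow> act x \<one>\<^bsub>G\<^esub> = x"
  using aone0 by blast
lemma acomp: "x \<in> X \<Longrightarrow> g \<in> carrier G \<Longrightarrow> h \<in> carrier G \<Longrightarrow> act (act x g) h = act x (g \<otimes>\<^bsub>G\<^esub> h)"
  using acomp0 by blast
lemma amono: "x \<in> X \<Longrightarrow> y \<in> X \<Longrightarrow> g \<in> carrier G \<Longrightarrow> leq x y \<Longrightarrow> leq (act x g) (act y g)"
  using amono0 by blast

lemma mG: "monoid G" by (rule group.is_monoid[OF grp])
lemma onec: "\<one>\<^bsub>G\<^esub> \<in> carrier G" by (rule monoid.one_closed[OF mG])
lemma mcl: "a \<in> carrier G \<Longrightarrow> b \<in> carrier G \<Longrightarrow> a \<otimes>\<^bsub>G\<^esub> b \<in> carrier G" by (rule monoid.m_closed[OF mG])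
lemma icl: "a \<in> carrier G \<Longrightarrow> inv\<^bsub>G\<^esub> a \<in> carrier G" by (rule group.inv_closed[OF grp])
lemma rinv: "a \<in> carrier G \<Longrightarrow> a \<otimes>\<^bsub>G\<^esub> inv\<^bsub>G\<^esub> a = \<one>\<^bsub>G\<^esub>" by (rule group.r_inv[OF grp])
lemma pcl: "a \<in> carrier G \<Longrightarrow> a [^]\<^bsub>G\<^esub> (k::nat) \<in> carrier G" by (rule monoid.nat_pow_closed[OF mG])

lemma in_orbit: "g \<in> carrier G \<Longrightarrow> act x g \<in> orbit G act x" unfolding orbit_def by blast
lemma orbitE: "y \<in> orbit G act x \<Longrightarrow> \<exists>g\<in>carrier G. y = act x g" unfolding orbit_def by blast

lemma ainv: assumes x: "x \<in> X" and g: "g \<in> carrier G" shows "act (act x g) (inv\<^bsub>G\<^esub> g) = x"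
proof -
  have "act (act x g) (inv\<^bsub>G\<^esub> g) = act x (g \<otimes>\<^bsub>G\<^esub> inv\<^bsub>G\<^esub> g)" by (rule acomp[OF x g icl[OF g]])
  also have "\<dots> = act x \<one>\<^bsub>G\<^esub>" by (simp only: rinv[OF g])
  also have "\<dots> = x" by (rule aone[OF x])
  finally show ?thesis .
qed

lemma orbit_act: assumes x: "x \<in> X" and g: "g \<in> carrier G" shows "orbit G act (act x g) = orbit G act x"
proof
  show "orbit G act (act x g) \<subseteq> orbit G act x"
  proof
    fix y assume "y \<in> orbit G act (act x g)"
    then obtain h where h: "h \<in> carrier G" "y = act (act x g) h" using orbitE by blast
    have "y = act x (g \<otimes>\<^bsub>G\<^esub> h)" using h(2) acomp[OF x g h(1)] by simp
    then show "y \<in> orbit G act x" using in_orbit[OF mcl[OF g h(1)]] by simp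
  qed
next
  show "orbit G act x \<subseteq> orbit G act (act x g)"
  proof
    fix y assume "y \<in> orbit G act x"
    then obtain k where k: "k \<in> carrier G" "y = act x k" using orbitE by blast
    have "act (act x g) (inv\<^bsub>G\<^esub> g \<otimes>\<^bsub>G\<^esub> k) = act (act (act x g) (inv\<^bsub>G\<^esub> g)) k"
      by (rule acomp[OF aclosed[OF x g] icl[OF g] k(1), symmetric])
    also have "\<dots> = y" using ainv[OF x g] k(2) by simp
    finally have "act (act x g) (inv\<^bsub>G\<^esub> g \<otimes>\<^bsub>G\<^esub> k) = y" .
    then show "y \<in> orbit G act (act x g)" using in_orbit[OF mcl[OF icl[OF g] k(1)], of "act x g"] by simp
  qed
qed

lemma orbit_self: assumes "x \<in> X" shows "x \<in> orbit G act x"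
  using in_orbit[OF onec, of x] aone[OF assms] by simp

lemma orbit_sub: "x \<in> X \<Longrightarrow> orbit G act x \<subseteq> X"
  using orbitE aclosed by blast

lemma orbit_eq: assumes "x \<in> X" "y \<in> orbit G act x" shows "orbit G act y = orbit G act x"
proof -
  obtain g where "g \<in> carrier G" "y = act x g" using orbitE[OF assms(2)] by blast
  then show ?thesis using orbit_act[OF assms(1)] by simp
qed

lemma fixpt: assumes x: "x \<in> X" and g: "g \<in> carrier G" and le: "leq x (act x g)"
  shows "act x g = x"
proof -
  have xg: "act x g \<in> X" by (rule aclosed[OF x g])
  have step: "leq (act x g) (act x (g [^]\<^bsub>G\<^esub> Suc k))" if "leq x (act x (g [^]\<^bsub>G\<^esub> k))" for k :: nat
  proof -
    have gk: "g [^]\<^bsub>G\<^esub> k \<in> carrier G" by (rule pcl[OF g])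
    have "leq (act x g) (act (act x (g [^]\<^bsub>G\<^esub> k)) g)" by (rule amono[OF x aclosed[OF x gk] g that])
    moreover have "act (act x (g [^]\<^bsub>G\<^esub> k)) g = act x (g [^]\<^bsub>G\<^esub> k \<otimes>\<^bsub>G\<^esub> g)" by (rule acomp[OF x gk g])
    moreover have "g [^]\<^bsub>G\<^esub> k \<otimes>\<^bsub>G\<^esub> g = g [^]\<^bsub>G\<^esub> Suc k" by (rule monoid.nat_pow_Suc[OF mG, symmetric])
    ultimately show ?thesis by (simp only:)
  qed
  have P: "leq x (act x (g [^]\<^bsub>G\<^esub> k))" for k :: nat
  proof (induction k)
    case 0
    have "act x (g [^]\<^bsub>G\<^esub> (0::nat)) = x" using aone[OF x] by simp
    then show ?case using lrefl[OF x] by simp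
  next
    case (Suc k)
    have "leq (act x g) (act x (g [^]\<^bsub>G\<^esub> Suc k))" by (rule step[OF Suc])
    then show ?case using ltrans[OF x xg aclosed[OF x pcl[OF g]] le] by blast
  qed
  have "finite (carrier G)" "carrier G \<noteq> {}" using finG onec by auto
  then have "order G > 0" unfolding order_def by (simp add: card_gt_0_iff)
  then obtain m where m: "order G = Suc m" using gr0_conv_Suc by blast
  have "g [^]\<^bsub>G\<^esub> order G = \<one>\<^bsub>G\<^esub>" by (rule group.pow_order_eq_1[OF grp g])
  then have "leq (act x g) (act x \<one>\<^bsub>G\<^esub>)" using step[OF P[of m]] m by simp
  then have "leq (act x g) x" using aone[OF x] by simp
  then show ?thesis using lanti[OF x xg le] by simp
qed

lemma chain_inj:
  assumes c: "c \<in> chains_of X leq" and v: "v \<in> c" and w: "w \<in> c"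
    and o: "orbit G act v = orbit G act w"
  shows "v = w"
proof -
  have cX: "c \<subseteq> X" and cmp: "\<forall>x\<in>c. \<forall>y\<in>c. leq x y \<or> leq y x" using c unfolding chains_of_def by auto
  have vX: "v \<in> X" and wX: "w \<in> X" using cX v w by auto
  have "w \<in> orbit G act v" using o orbit_self[OF wX] by simp
  then obtain g where g: "g \<in> carrier G" "w = act v g" using orbitE by blast
  have "leq v w \<or> leq w v" using cmp v w by blast
  then show ?thesis
  proof
    assume "leq v w" then show ?thesis using fixpt[OF vX g(1)] g(2) by simp
  next
    assume a: "leq w v"
    have ig: "inv\<^bsub>G\<^esub> g \<in> carrier G" by (rule icl[OF g(1)])
    have vw: "v = act w (inv\<^bsub>G\<^esub> g)" using ainv[OF vX g(1)] g(2) by simp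
    then have "act w (inv\<^bsub>G\<^esub> g) = w" using fixpt[OF wX ig] a by simp
    then show ?thesis using vw by simp
  qed
qed

lemma chains_subX: "c \<in> chains_of X leq \<Longrightarrow> c \<subseteq> X" unfolding chains_of_def by blast

lemma img_orbit: assumes c: "c \<subseteq> X" and g: "g \<in> carrier G"
  shows "orbit G act ` ((\<lambda>x. act x g) ` c) = orbit G act ` c"
  unfolding image_image
proof (rule image_cong[OF refl])
  fix x assume "x \<in> c"
  then show "orbit G act (act x g) = orbit G act x" using orbit_act[OF _ g] c by blast
qed

lemma self_co: assumes c: "c \<subseteq> X" shows "c \<in> chain_orbit G act c"
proof -
  have "(\<lambda>x. act x \<one>\<^bsub>G\<^esub>) ` c = (\<lambda>x. x) ` c"
  proof (rule image_cong[OF refl])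
    fix x assume "x \<in> c" then show "act x \<one>\<^bsub>G\<^esub> = x" using aone c by blast
  qed
  then have "(\<lambda>x. act x \<one>\<^bsub>G\<^esub>) ` c = c" by simp
  then show ?thesis unfolding chain_orbit_def using onec by blast
qed

lemma alpha_eq: assumes c0: "c0 \<subseteq> X" shows "alpha G act (chain_orbit G act c0) = orbit G act ` c0"
proof -
  have "(SOME c. c \<in> chain_orbit G act c0) \<in> chain_orbit G act c0" using self_co[OF c0] by (rule someI)
  then obtain g where g: "g \<in> carrier G" "(SOME c. c \<in> chain_orbit G act c0) = (\<lambda>x. act x g) ` c0"
    unfolding chain_orbit_def by blast
  show ?thesis unfolding alpha_def g(2) using img_orbit[OF c0 g(1)] by simp
qed

lemma chain_orbit_act: assumes c: "c \<subseteq> X" and g: "g \<in> carrier G"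
  shows "chain_orbit G act ((\<lambda>x. act x g) ` c) = chain_orbit G act c"
proof
  show "chain_orbit G act ((\<lambda>x. act x g) ` c) \<subseteq> chain_orbit G act c"
  proof
    fix d assume "d \<in> chain_orbit G act ((\<lambda>x. act x g) ` c)"
    then obtain h where h: "h \<in> carrier G" "d = (\<lambda>x. act x h) ` ((\<lambda>x. act x g) ` c)"
      unfolding chain_orbit_def by blast
    have "d = (\<lambda>x. act x (g \<otimes>\<^bsub>G\<^esub> h)) ` c" unfolding h(2) image_image
    proof (rule image_cong[OF refl])
      fix x assume "x \<in> c" then have "x \<in> X" using c by blast
      then show "act (act x g) h = act x (g \<otimes>\<^bsub>G\<^esub> h)" using acomp g h(1) by blast
    qed
    then show "d \<in> chain_orbit G act c" unfolding chain_orbit_def using mcl[OF g h(1)] by blast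
  qed
next
  show "chain_orbit G act c \<subseteq> chain_orbit G act ((\<lambda>x. act x g) ` c)"
  proof
    fix d assume "d \<in> chain_orbit G act c"
    then obtain h where h: "h \<in> carrier G" "d = (\<lambda>x. act x h) ` c"
      unfolding chain_orbit_def by blast
    have ig: "inv\<^bsub>G\<^esub> g \<otimes>\<^bsub>G\<^esub> h \<in> carrier G" by (rule mcl[OF icl[OF g] h(1)])
    have "d = (\<lambda>x. act x (inv\<^bsub>G\<^esub> g \<otimes>\<^bsub>G\<^esub> h)) ` ((\<lambda>x. act x g) ` c)" unfolding h(2) image_image
    proof (rule image_cong[OF refl])
      fix x assume x: "x \<in> c"
      have xX: "x \<in> X" using x c by blast
      have "act (act x g) (inv\<^bsub>G\<^esub> g \<otimes>\<^bsub>G\<^esub> h) = act (act (act x g) (inv\<^bsub>G\<^esub> g)) h"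
        by (rule acomp[OF aclosed[OF xX g] icl[OF g] h(1), symmetric])
      also have "\<dots> = act x h" using ainv[OF xX g] by simp
      finally show "act x h = act (act x g) (inv\<^bsub>G\<^esub> g \<otimes>\<^bsub>G\<^esub> h)" by simp
    qed
    then show "d \<in> chain_orbit G act ((\<lambda>x. act x g) ` c)" using ig unfolding chain_orbit_def by blast
  qed
qed

lemma orbit_le_trans:
  assumes A: "A \<in> orbit_poset G X act" and B: "B \<in> orbit_poset G X act" and C: "C \<in> orbit_poset G X act"
    and ab: "orbit_le leq A B" and bc: "orbit_le leq B C"
  shows "orbit_le leq A C"
proof -
  obtain a1 b1 where ab1: "a1 \<in> A" "b1 \<in> B" "leq a1 b1" using ab unfolding orbit_le_def by blast
  obtain b2 c2 where bc2: "b2 \<in> B" "c2 \<in> C" "leq b2 c2" using bc unfolding orbit_le_def by blast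
  obtain b where b: "b \<in> X" "B = orbit G act b" using B unfolding orbit_poset_def by blast
  obtain a where a: "a \<in> X" "A = orbit G act a" using A unfolding orbit_poset_def by blast
  obtain c where c: "c \<in> X" "C = orbit G act c" using C unfolding orbit_poset_def by blast
  have b1X: "b1 \<in> X" using orbit_sub[OF b(1)] b(2) ab1(2) by blast
  have b2X: "b2 \<in> X" using orbit_sub[OF b(1)] b(2) bc2(1) by blast
  have a1X: "a1 \<in> X" using orbit_sub[OF a(1)] a(2) ab1(1) by blast
  have c2X: "c2 \<in> X" using orbit_sub[OF c(1)] c(2) bc2(2) by blast
  have "orbit G act b1 = orbit G act b" using orbit_eq[OF b(1)] b(2) ab1(2) by blast
  moreover have "orbit G act b2 = orbit G act b" using orbit_eq[OF b(1)] b(2) bc2(1) by blast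
  ultimately have "b2 \<in> orbit G act b1" using orbit_self[OF b2X] by simp
  then obtain g where g: "g \<in> carrier G" "b2 = act b1 g" using orbitE by blast
  have "leq (act a1 g) b2" using amono[OF a1X b1X g(1) ab1(3)] g(2) by simp
  then have "leq (act a1 g) c2" using ltrans[OF aclosed[OF a1X g(1)] b2X c2X] bc2(3) by blast
  moreover have "act a1 g \<in> A"
  proof -
    have "orbit G act a1 = A" using orbit_eq[OF a(1)] a(2) ab1(1) by blast
    then show ?thesis using in_orbit[OF g(1), of a1] by simp
  qed
  ultimately show ?thesis unfolding orbit_le_def using bc2(2) by blast
qed

lemma match:
  assumes B: "property_B G X leq act" and c1: "c1 \<in> chains_of X leq" and c2: "c2 \<in> chains_of X leq"
    and sub: "orbit G act ` c1 \<subseteq> orbit G act ` c2"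
  shows "\<exists>g\<in>carrier G. (\<lambda>x. act x g) ` c1 \<subseteq> c2 \<and>
           (orbit G act ` c1 = orbit G act ` c2 \<longrightarrow> (\<lambda>x. act x g) ` c1 = c2)"
proof -
  have c1X: "c1 \<subseteq> X" and c2X: "c2 \<subseteq> X" using c1 c2 chains_subX by auto
  have ex: "\<exists>g. g \<in> carrier G \<and> act v g \<in> c2" if v: "v \<in> c1" for v
  proof -
    have "orbit G act v \<in> orbit G act ` c2" using sub v by blast
    then obtain w where w: "w \<in> c2" "orbit G act v = orbit G act w" by blast
    have "w \<in> orbit G act v" using w(2) orbit_self c2X w(1) by blast
    then show ?thesis using w(1) orbitE by blast
  qed
  define f where "f v = (SOME g. g \<in> carrier G \<and> act v g \<in> c2)" for v
  have f: "f v \<in> carrier G \<and> act v (f v) \<in> c2" if "v \<in> c1" for v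
    unfolding f_def using someI_ex[OF ex[OF that]] .
  have sub2: "(\<lambda>v. act v (f v)) ` c1 \<subseteq> c2" using f by blast
  have c1ne: "c1 \<noteq> {}" using c1 unfolding chains_of_def by blast
  have c2cmp: "\<forall>x\<in>c2. \<forall>y\<in>c2. leq x y \<or> leq y x" using c2 unfolding chains_of_def by blast
  have ch: "(\<lambda>v. act v (f v)) ` c1 \<in> chains_of X leq"
    unfolding chains_of_def
  proof (intro CollectI conjI)
    show "(\<lambda>v. act v (f v)) ` c1 \<noteq> {}" using c1ne by blast
    show "(\<lambda>v. act v (f v)) ` c1 \<subseteq> X" using sub2 c2X by blast
    show "\<forall>x\<in>(\<lambda>v. act v (f v)) ` c1. \<forall>y\<in>(\<lambda>v. act v (f v)) ` c1. leq x y \<or> leq y x"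
      using sub2 c2cmp by blast
  qed
  have fG: "\<forall>v\<in>c1. f v \<in> carrier G" using f by blast
  have "c1 \<in> chains_of X leq \<longrightarrow> (\<forall>v\<in>c1. f v \<in> carrier G) \<longrightarrow>
        (\<lambda>v. act v (f v)) ` c1 \<in> chains_of X leq \<longrightarrow>
        (\<exists>g\<in>carrier G. \<forall>v\<in>c1. act v (f v) = act v g)"
    using B unfolding property_B_def by blast
  then obtain g where g: "g \<in> carrier G" "\<forall>v\<in>c1. act v (f v) = act v g"
    using c1 fG ch by blast
  have img: "(\<lambda>x. act x g) ` c1 = (\<lambda>v. act v (f v)) ` c1"
    by (rule image_cong[OF refl]) (use g(2) in simp)
  have "(orbit G act ` c1 = orbit G act ` c2 \<longrightarrow> (\<lambda>x. act x g) ` c1 = c2)"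
  proof
    assume eq: "orbit G act ` c1 = orbit G act ` c2"
    show "(\<lambda>x. act x g) ` c1 = c2"
    proof
      show "(\<lambda>x. act x g) ` c1 \<subseteq> c2" using img sub2 by simp
    next
      show "c2 \<subseteq> (\<lambda>x. act x g) ` c1"
      proof
        fix w assume w: "w \<in> c2"
        then have "orbit G act w \<in> orbit G act ` c1" using eq by simp
        then obtain v where v: "v \<in> c1" "orbit G act w = orbit G act v" by blast
        have vX: "v \<in> X" using v(1) c1X by blast
        have fv: "f v \<in> carrier G" "act v (f v) \<in> c2" using f[OF v(1)] by auto
        have "orbit G act (act v (f v)) = orbit G act v" by (rule orbit_act[OF vX fv(1)])
        then have "act v (f v) = w" using chain_inj[OF c2 fv(2) w] v(2) by simp
        then show "w \<in> (\<lambda>x. act x g) ` c1" using img v(1) by blast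
      qed
    qed
  qed
  moreover have "(\<lambda>x. act x g) ` c1 \<subseteq> c2" using img sub2 by simp
  ultimately show ?thesis using g(1) by blast
qed

lemma lift:
  assumes "S \<subseteq> orbit_poset G X act" "S \<noteq> {}"
    "\<forall>A\<in>S. \<forall>B\<in>S. orbit_le leq A B \<or> orbit_le leq B A"
  shows "\<exists>c\<in>chains_of X leq. orbit G act ` c = S"
  using assms
proof (induction "card S" arbitrary: S rule: less_induct)
  case less
  have Ssub: "S \<subseteq> orbit_poset G X act" and Sne: "S \<noteq> {}"
    and Stot: "\<forall>A\<in>S. \<forall>B\<in>S. orbit_le leq A B \<or> orbit_le leq B A" using less.prems by auto
  have "finite (orbit_poset G X act)" unfolding orbit_poset_def using finX by simp
  then have finS: "finite S" using Ssub finite_subset by blast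
  have Str: "\<forall>A\<in>S. \<forall>B\<in>S. \<forall>C\<in>S. orbit_le leq A B \<and> orbit_le leq B C \<longrightarrow> orbit_le leq A C"
  proof (intro ballI impI)
    fix A B C assume "A \<in> S" "B \<in> S" "C \<in> S" and h: "orbit_le leq A B \<and> orbit_le leq B C"
    then have "A \<in> orbit_poset G X act" "B \<in> orbit_poset G X act" "C \<in> orbit_poset G X act" using Ssub by auto
    then show "orbit_le leq A C" using orbit_le_trans h by blast
  qed
  obtain Om where Om: "Om \<in> S" "\<forall>A\<in>S. orbit_le leq A Om"
    using max_in_total[OF finS Sne Stot Str] by blast
  have "Om \<in> orbit_poset G X act" using Om(1) Ssub by blast
  then obtain b where b: "b \<in> X" "Om = orbit G act b" unfolding orbit_poset_def by blast
  show ?case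
  proof (cases "S = {Om}")
    case True
    have "{b} \<in> chains_of X leq" unfolding chains_of_def using b(1) lrefl[OF b(1)] by blast
    moreover have "orbit G act ` {b} = S" using True b(2) by simp
    ultimately show ?thesis by blast
  next
    case False
    define S' where "S' = S - {Om}"
    have l1: "card S' < card S" unfolding S'_def by (rule card_Diff1_less[OF finS Om(1)])
    have l2: "S' \<subseteq> orbit_poset G X act" using Ssub unfolding S'_def by blast
    have l3: "S' \<noteq> {}" using False Sne Om(1) unfolding S'_def by blast
    have l4: "\<forall>A\<in>S'. \<forall>B\<in>S'. orbit_le leq A B \<or> orbit_le leq B A"
      using Stot unfolding S'_def by blast
    obtain c where c: "c \<in> chains_of X leq" "orbit G act ` c = S'"
      using less.hyps[OF l1 l2 l3 l4] by (elim bexE)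
    have cX: "c \<subseteq> X" by (rule chains_subX[OF c(1)])
    have cne: "c \<noteq> {}" and ccmp: "\<forall>x\<in>c. \<forall>y\<in>c. leq x y \<or> leq y x" using c(1) unfolding chains_of_def by auto
    have fc: "finite c" using cX finX finite_subset by blast
    have ctr: "\<forall>x\<in>c. \<forall>y\<in>c. \<forall>z\<in>c. leq x y \<and> leq y z \<longrightarrow> leq x z"
      using ltrans0 cX by blast
    obtain m where m: "m \<in> c" "\<forall>a\<in>c. leq a m"
      using max_in_total[OF fc cne ccmp ctr] by blast
    have mX: "m \<in> X" using m(1) cX by blast
    have "orbit G act m \<in> S" using c(2) m(1) unfolding S'_def by blast
    then have "orbit_le leq (orbit G act m) Om" using Om(2) by blast
    then obtain a b1 where ab: "a \<in> orbit G act m" "b1 \<in> Om" "leq a b1" unfolding orbit_le_def by blast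
    obtain g where g: "g \<in> carrier G" "a = act m g" using orbitE[OF ab(1)] by blast
    have b1X: "b1 \<in> X" using ab(2) b orbit_sub by blast
    have ig: "inv\<^bsub>G\<^esub> g \<in> carrier G" by (rule icl[OF g(1)])
    define y where "y = act b1 (inv\<^bsub>G\<^esub> g)"
    have yX: "y \<in> X" unfolding y_def by (rule aclosed[OF b1X ig])
    have aX: "a \<in> X" using g aclosed[OF mX] by simp
    have "leq (act a (inv\<^bsub>G\<^esub> g)) y" unfolding y_def by (rule amono[OF aX b1X ig ab(3)])
    then have my: "leq m y" using ainv[OF mX g(1)] g(2) by simp
    have "orbit G act y = orbit G act b1" unfolding y_def by (rule orbit_act[OF b1X ig])
    also have "\<dots> = Om" using orbit_eq[OF b(1)] ab(2) b(2) by simp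
    finally have oy: "orbit G act y = Om" .
    have "insert y c \<in> chains_of X leq"
      unfolding chains_of_def
    proof (intro CollectI conjI)
      show "insert y c \<noteq> {}" by simp
      show "insert y c \<subseteq> X" using yX cX by simp
      have cy: "\<forall>x\<in>c. leq x y" using m(2) ltrans[OF _ mX yX _ my] cX by blast
      show "\<forall>x\<in>insert y c. \<forall>z\<in>insert y c. leq x z \<or> leq z x"
        using ccmp cy lrefl[OF yX] by blast
    qed
    moreover have "orbit G act ` insert y c = S" using oy c(2) Om(1) unfolding S'_def by blast
    ultimately show ?thesis by blast
  qed
qed

end


theorem proposition2p9:
  assumes "finite_G_poset G X leq act"
  shows "(inj_on (alpha G act) (chain_orbit_poset G X leq act) \<longleftrightarrow> property_B G X leq act) \<and>
         (inj_on (alpha G act) (chain_orbit_poset G X leq act) \<longrightarrow>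
            bij_betw (alpha G act) (chain_orbit_poset G X leq act)
                     (chains_of (orbit_poset G X act) (orbit_le leq)) \<and>
            (\<forall>Q1\<in>chain_orbit_poset G X leq act. \<forall>Q2\<in>chain_orbit_poset G X leq act.
               chain_orbit_le Q1 Q2 \<longleftrightarrow> alpha G act Q1 \<subseteq> alpha G act Q2))"
proof -
  note fp = assms
  have sx: "c \<in> chains_of X leq \<Longrightarrow> c \<subseteq> X" for c by (rule chains_subX[OF fp])
  have B2I: "inj_on (alpha G act) (chain_orbit_poset G X leq act)" if B: "property_B G X leq act"
  proof (rule inj_onI)
    fix Q1 Q2 assume q1: "Q1 \<in> chain_orbit_poset G X leq act" and q2: "Q2 \<in> chain_orbit_poset G X leq act"
      and eq: "alpha G act Q1 = alpha G act Q2"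
    obtain c1 where c1: "c1 \<in> chains_of X leq" "Q1 = chain_orbit G act c1" using q1 unfolding chain_orbit_poset_def by blast
    obtain c2 where c2: "c2 \<in> chains_of X leq" "Q2 = chain_orbit G act c2" using q2 unfolding chain_orbit_poset_def by blast
    have "orbit G act ` c1 = orbit G act ` c2"
      using eq c1(2) c2(2) alpha_eq[OF fp sx[OF c1(1)]] alpha_eq[OF fp sx[OF c2(1)]] by simp
    then obtain g where g: "g \<in> carrier G" "(\<lambda>x. act x g) ` c1 = c2"
      using match[OF fp B c1(1) c2(1)] by auto
    show "Q1 = Q2" using chain_orbit_act[OF fp sx[OF c1(1)] g(1)] g(2) c1(2) c2(2) by simp
  qed
  have I2B: "property_B G X leq act" if I: "inj_on (alpha G act) (chain_orbit_poset G X leq act)"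
    unfolding property_B_def
  proof (intro allI impI)
    fix c f assume c: "c \<in> chains_of X leq" and f: "\<forall>v\<in>c. f v \<in> carrier G"
      and cf: "(\<lambda>v. act v (f v)) ` c \<in> chains_of X leq"
    have cX: "c \<subseteq> X" by (rule sx[OF c])
    have cfX: "(\<lambda>v. act v (f v)) ` c \<subseteq> X" by (rule sx[OF cf])
    have "orbit G act ` ((\<lambda>v. act v (f v)) ` c) = orbit G act ` c"
      unfolding image_image
    proof (rule image_cong[OF refl])
      fix x assume x: "x \<in> c"
      show "orbit G act (act x (f x)) = orbit G act x" using orbit_act[OF fp _ ] x f cX by blast
    qed
    then have "alpha G act (chain_orbit G act ((\<lambda>v. act v (f v)) ` c)) = alpha G act (chain_orbit G act c)"
      using alpha_eq[OF fp cX] alpha_eq[OF fp cfX] by simp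
    moreover have "chain_orbit G act ((\<lambda>v. act v (f v)) ` c) \<in> chain_orbit_poset G X leq act"
      unfolding chain_orbit_poset_def using cf by (rule imageI)
    moreover have "chain_orbit G act c \<in> chain_orbit_poset G X leq act"
      unfolding chain_orbit_poset_def using c by (rule imageI)
    ultimately have "chain_orbit G act ((\<lambda>v. act v (f v)) ` c) = chain_orbit G act c"
      using inj_onD[OF I] by blast
    moreover have "(\<lambda>v. act v (f v)) ` c \<in> chain_orbit G act ((\<lambda>v. act v (f v)) ` c)"
      by (rule self_co[OF fp cfX])
    ultimately have "(\<lambda>v. act v (f v)) ` c \<in> chain_orbit G act c" by simp
    then obtain g where g: "g \<in> carrier G" "(\<lambda>v. act v (f v)) ` c = (\<lambda>x. act x g) ` c"
      unfolding chain_orbit_def by blast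
    have "\<forall>v\<in>c. act v (f v) = act v g"
    proof
      fix v assume v: "v \<in> c"
      have "act v (f v) \<in> (\<lambda>x. act x g) ` c" using g(2) v by blast
      then obtain w where w: "w \<in> c" "act v (f v) = act w g" by blast
      have vX: "v \<in> X" and wX: "w \<in> X" using v w(1) cX by auto
      have "orbit G act v = orbit G act (act v (f v))" using orbit_act[OF fp vX] f v by simp
      also have "\<dots> = orbit G act w" using w(2) orbit_act[OF fp wX g(1)] by simp
      finally have "v = w" using chain_inj[OF fp c v w(1)] by simp
      then show "act v (f v) = act v g" using w(2) by simp
    qed
    then show "\<exists>g\<in>carrier G. \<forall>v\<in>c. act v (f v) = act v g" using g(1) by blast
  qed
  have part2: "bij_betw (alpha G act) (chain_orbit_poset G X leq act)
                     (chains_of (orbit_poset G X act) (orbit_le leq)) \<and>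
            (\<forall>Q1\<in>chain_orbit_poset G X leq act. \<forall>Q2\<in>chain_orbit_poset G X leq act.
               chain_orbit_le Q1 Q2 \<longleftrightarrow> alpha G act Q1 \<subseteq> alpha G act Q2)"
    if I: "inj_on (alpha G act) (chain_orbit_poset G X leq act)"
  proof
    have img: "alpha G act ` chain_orbit_poset G X leq act = chains_of (orbit_poset G X act) (orbit_le leq)"
    proof
      show "alpha G act ` chain_orbit_poset G X leq act \<subseteq> chains_of (orbit_poset G X act) (orbit_le leq)"
      proof
        fix S assume "S \<in> alpha G act ` chain_orbit_poset G X leq act"
        then obtain c where c: "c \<in> chains_of X leq" "S = alpha G act (chain_orbit G act c)"
          unfolding chain_orbit_poset_def by blast
        have cX: "c \<subseteq> X" by (rule sx[OF c(1)])
        have S: "S = orbit G act ` c" using c(2) alpha_eq[OF fp cX] by simp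
        have cne: "c \<noteq> {}" and ccmp: "\<forall>x\<in>c. \<forall>y\<in>c. leq x y \<or> leq y x" using c(1) unfolding chains_of_def by auto
        have os: "\<forall>x\<in>c. x \<in> orbit G act x" using orbit_self[OF fp] cX by blast
        show "S \<in> chains_of (orbit_poset G X act) (orbit_le leq)"
          unfolding chains_of_def
        proof (intro CollectI conjI)
          show "S \<noteq> {}" using S cne by simp
          show "S \<subseteq> orbit_poset G X act" using S cX unfolding orbit_poset_def by blast
          show "\<forall>x\<in>S. \<forall>y\<in>S. orbit_le leq x y \<or> orbit_le leq y x"
            unfolding S orbit_le_def using ccmp os by blast
        qed
      qed
    next
      show "chains_of (orbit_poset G X act) (orbit_le leq) \<subseteq> alpha G act ` chain_orbit_poset G X leq act"
      proof
        fix S assume S: "S \<in> chains_of (orbit_poset G X act) (orbit_le leq)"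
        have h1: "S \<subseteq> orbit_poset G X act" and h2: "S \<noteq> {}"
          and h3: "\<forall>A\<in>S. \<forall>B\<in>S. orbit_le leq A B \<or> orbit_le leq B A"
          using S unfolding chains_of_def by auto
        obtain c where c: "c \<in> chains_of X leq" "orbit G act ` c = S"
          using lift[OF fp h1 h2 h3] by (elim bexE)
        have "alpha G act (chain_orbit G act c) = S" using alpha_eq[OF fp sx[OF c(1)]] c(2) by simp
        moreover have "chain_orbit G act c \<in> chain_orbit_poset G X leq act"
          unfolding chain_orbit_poset_def using c(1) by (rule imageI)
        ultimately show "S \<in> alpha G act ` chain_orbit_poset G X leq act" by blast
      qed
    qed
    show "bij_betw (alpha G act) (chain_orbit_poset G X leq act) (chains_of (orbit_poset G X act) (orbit_le leq))"
      unfolding bij_betw_def using I img by blast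
  next
    have B: "property_B G X leq act" using I2B I by blast
    show "\<forall>Q1\<in>chain_orbit_poset G X leq act. \<forall>Q2\<in>chain_orbit_poset G X leq act.
               chain_orbit_le Q1 Q2 \<longleftrightarrow> alpha G act Q1 \<subseteq> alpha G act Q2"
    proof (intro ballI)
      fix Q1 Q2 assume q1: "Q1 \<in> chain_orbit_poset G X leq act" and q2: "Q2 \<in> chain_orbit_poset G X leq act"
      obtain c1 where c1: "c1 \<in> chains_of X leq" "Q1 = chain_orbit G act c1" using q1 unfolding chain_orbit_poset_def by blast
      obtain c2 where c2: "c2 \<in> chains_of X leq" "Q2 = chain_orbit G act c2" using q2 unfolding chain_orbit_poset_def by blast
      have c1X: "c1 \<subseteq> X" and c2X: "c2 \<subseteq> X" using sx c1(1) c2(1) by auto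
      have a1: "alpha G act Q1 = orbit G act ` c1" using alpha_eq[OF fp c1X] c1(2) by simp
      have a2: "alpha G act Q2 = orbit G act ` c2" using alpha_eq[OF fp c2X] c2(2) by simp
      show "chain_orbit_le Q1 Q2 \<longleftrightarrow> alpha G act Q1 \<subseteq> alpha G act Q2"
      proof
        assume "chain_orbit_le Q1 Q2"
        then obtain d1 d2 where d: "d1 \<in> Q1" "d2 \<in> Q2" "d1 \<subseteq> d2" unfolding chain_orbit_le_def by blast
        obtain g1 where g1: "g1 \<in> carrier G" "d1 = (\<lambda>x. act x g1) ` c1" using d(1) c1(2) unfolding chain_orbit_def by blast
        obtain g2 where g2: "g2 \<in> carrier G" "d2 = (\<lambda>x. act x g2) ` c2" using d(2) c2(2) unfolding chain_orbit_def by blast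
        have "orbit G act ` d1 \<subseteq> orbit G act ` d2" using d(3) by (rule image_mono)
        then show "alpha G act Q1 \<subseteq> alpha G act Q2"
          using a1 a2 g1 g2 img_orbit[OF fp c1X g1(1)] img_orbit[OF fp c2X g2(1)] by simp
      next
        assume "alpha G act Q1 \<subseteq> alpha G act Q2"
        then have "orbit G act ` c1 \<subseteq> orbit G act ` c2" using a1 a2 by simp
        then obtain g where g: "g \<in> carrier G" "(\<lambda>x. act x g) ` c1 \<subseteq> c2"
          using match[OF fp B c1(1) c2(1)] by blast
        have "(\<lambda>x. act x g) ` c1 \<in> Q1" using c1(2) g(1) unfolding chain_orbit_def by blast
        moreover have "c2 \<in> Q2" using c2(2) self_co[OF fp c2X] by simp
        ultimately show "chain_orbit_le Q1 Q2" unfolding chain_orbit_le_def using g(2) by blast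
      qed
    qed
  qed
  show ?thesis using B2I I2B part2 by blast
qed

end
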